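(* Let $\Gamma$ be a group that is nilpotent of class $\le n$, let $S\subseteq\Gamma\setminus\{\mathbb{I}\}$ be a generating set, $G:=\mathrm{Cay}(\Gamma,S)$, and let $r\ge\max\{2^{n+2},10\}$ be an integer. Let $h\in S$ be an involution such that $\{\mathbb{I},h\}$ is an $r$-local $2$-separator of $G$, and suppose that $G$ has no $r$-local cutvertex. Then every element of $S$ that traverses $\{\mathbb{I},h\}$ antisymmetrically also traverses $\{\mathbb{I},h\}$ symmetrically.
   Context: Generating sets are closed under inverses; $\mathrm{Cay}(\Gamma,S)$ is the simple graph on $\Gamma$ with edges $\{g,gs\}$. $a\equiv b$ means $a=b$ or $a=b^{-1}$; $\Gamma$ is nilpotent of class $\le n$ if $[g,h]_n=\mathbb{I}$ for all $g\not\equiv h$, where $[g,h]_1=gh^{-1}g^{-1}h$ and $[g,h]_n$ is the reduced form of $g[g,h]_{n-1}^{-1}g^{-1}[g,h]_{n-1}$. Ball $B_r(v)$: subgraph of all vertices and edges on closed walks of length $\le r$ through $v$; $v$ is an $r$-local cutvertex if $B_r(v)-v$ is disconnected. For $X=\{v_0,v_1\}$, $N(X)$ is the set of vertices outside $X$ adjacent to $X$; the connectivity graph $C_r(v_0,v_1)$ has vertex set $N(X)$, $a,b$ adjacent if for some $i$ they lie in the same component of $B_r(v_i)-v_0-v_1$; $X$ is an $r$-local $2$-separator if $C_r(v_0,v_1)$ is disconnected and $d_G(v_0,v_1)\le r/2$; the $r$-local components at $X$ are the components of $C_r(v_0,v_1)$. An element $g\in S$ traverses $X$ if for some $x\in X$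 the vertices $xg^{-1}$ and $xg$ lie in distinct $r$-local components at $X$. When $h$ is an involution and $g$ traverses $\{\mathbb{I},h\}$, $g$ traverses it symmetrically if $g^{-1}$ and $hg$ lie in distinct $r$-local components at $\{\mathbb{I},h\}$, and antisymmetrically if $g^{-1}$ and $hg^{-1}$ lie in distinct $r$-local components at $\{\mathbb{I},h\}$. *)

theory Defs
  imports "HOL-Algebra.Algebra"
begin

primrec iter_comm :: "('a, 'b) monoid_scheme \<Rightarrow> 'a \<Rightarrow> 'a \<Rightarrow> nat \<Rightarrow> 'a" where
  "iter_comm G g h 0 = h"
| "iter_comm G g h (Suc k) =
     g \<otimes>\<^bsub>G\<^esub> inv\<^bsub>G\<^esub> (iter_comm G g h k) \<otimes>\<^bsub>G\<^esub> inv\<^bsub>G\<^esub> g \<otimes>\<^bsub>G\<^esub> iter_comm G g h k"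

definition nilpotent_class_le :: "('a, 'b) monoid_scheme \<Rightarrow> nat \<Rightarrow> bool" where
  "nilpotent_class_le G n \<longleftrightarrow>
     (\<forall>g\<in>carrier G. \<forall>h\<in>carrier G. (g \<noteq> h \<and> g \<noteq> inv\<^bsub>G\<^esub> h) \<longrightarrow> iter_comm G g h n = \<one>\<^bsub>G\<^esub>)"

definition cay :: "('a, 'b) monoid_scheme \<Rightarrow> 'a set \<Rightarrow> 'a \<Rightarrow> 'a \<Rightarrow> bool" where
  "cay G S x y \<longleftrightarrow> x \<in> carrier G \<and> (\<exists>s\<in>S. y = x \<otimes>\<^bsub>G\<^esub> s)"

text \<open>A walk is a nonempty vertex list with consecutive vertices adjacent;
  its length is (number of vertices - 1).\<close>
definition is_walk :: "('a \<Rightarrow> 'a \<Rightarrow> bool) \<Rightarrow> 'a list \<Rightarrow> bool" where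
  "is_walk E ws \<longleftrightarrow> ws \<noteq> [] \<and> (\<forall>i. Suc i < length ws \<longrightarrow> E (ws ! i) (ws ! Suc i))"

definition closed_walk_at :: "('a \<Rightarrow> 'a \<Rightarrow> bool) \<Rightarrow> nat \<Rightarrow> 'a \<Rightarrow> 'a list \<Rightarrow> bool" where
  "closed_walk_at E r v ws \<longleftrightarrow> is_walk E ws \<and> hd ws = v \<and> last ws = v \<and> length ws \<le> Suc r"

definition ball_V :: "('a \<Rightarrow> 'a \<Rightarrow> bool) \<Rightarrow> nat \<Rightarrow> 'a \<Rightarrow> 'a set" where
  "ball_V E r v = {u. \<exists>ws. closed_walk_at E r v ws \<and> u \<in> set ws}"

definition ball_E :: "('a \<Rightarrow> 'a \<Rightarrow> bool) \<Rightarrow> nat \<Rightarrow> 'a \<Rightarrow> 'a \<Rightarrow> 'a \<Rightarrow> bool" where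
  "ball_E E r v a b \<longleftrightarrow> (\<exists>ws i. closed_walk_at E r v ws \<and> Suc i < length ws \<and>
      ((ws ! i = a \<and> ws ! Suc i = b) \<or> (ws ! i = b \<and> ws ! Suc i = a)))"

definition conn_in :: "'a set \<Rightarrow> ('a \<Rightarrow> 'a \<Rightarrow> bool) \<Rightarrow> 'a \<Rightarrow> 'a \<Rightarrow> bool" where
  "conn_in V F a b \<longleftrightarrow> a \<in> V \<and> b \<in> V \<and> (\<lambda>x y. x \<in> V \<and> y \<in> V \<and> F x y)\<^sup>*\<^sup>* a b"

definition local_cutvertex :: "('a \<Rightarrow> 'a \<Rightarrow> bool) \<Rightarrow> nat \<Rightarrow> 'a \<Rightarrow> bool" where
  "local_cutvertex E r v \<longleftrightarrow>
     (\<exists>a b. a \<in> ball_V E r v - {v} \<and> b \<in> ball_V E r v - {v} \<and>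
            \<not> conn_in (ball_V E r v - {v}) (ball_E E r v) a b)"

definition nbhd :: "('a \<Rightarrow> 'a \<Rightarrow> bool) \<Rightarrow> 'a set \<Rightarrow> 'a set" where
  "nbhd E Z = {u. u \<notin> Z \<and> (\<exists>z\<in>Z. E z u)}"

definition conn_graph_adj :: "('a \<Rightarrow> 'a \<Rightarrow> bool) \<Rightarrow> nat \<Rightarrow> 'a \<Rightarrow> 'a \<Rightarrow> 'a \<Rightarrow> 'a \<Rightarrow> bool" where
  "conn_graph_adj E r v0 v1 a b \<longleftrightarrow>
     a \<in> nbhd E {v0, v1} \<and> b \<in> nbhd E {v0, v1} \<and>
     (\<exists>v\<in>{v0, v1}. conn_in (ball_V E r v - {v0, v1}) (ball_E E r v) a b)"

definition same_local_comp :: "('a \<Rightarrow> 'a \<Rightarrow> bool) \<Rightarrow> nat \<Rightarrow> 'a \<Rightarrow> 'a \<Rightarrow> 'a \<Rightarrow> 'a \<Rightarrow> bool" where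
  "same_local_comp E r v0 v1 a b \<longleftrightarrow>
     a \<in> nbhd E {v0, v1} \<and> b \<in> nbhd E {v0, v1} \<and> (conn_graph_adj E r v0 v1)\<^sup>*\<^sup>* a b"

definition distinct_local_comps :: "('a \<Rightarrow> 'a \<Rightarrow> bool) \<Rightarrow> nat \<Rightarrow> 'a \<Rightarrow> 'a \<Rightarrow> 'a \<Rightarrow> 'a \<Rightarrow> bool" where
  "distinct_local_comps E r v0 v1 a b \<longleftrightarrow>
     a \<in> nbhd E {v0, v1} \<and> b \<in> nbhd E {v0, v1} \<and> \<not> same_local_comp E r v0 v1 a b"

definition dist_le :: "('a \<Rightarrow> 'a \<Rightarrow> bool) \<Rightarrow> 'a \<Rightarrow> 'a \<Rightarrow> nat \<Rightarrow> bool" where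
  "dist_le E a b k \<longleftrightarrow> (\<exists>ws. is_walk E ws \<and> hd ws = a \<and> last ws = b \<and> length ws \<le> Suc k)"

definition local_2_separator :: "('a \<Rightarrow> 'a \<Rightarrow> bool) \<Rightarrow> nat \<Rightarrow> 'a \<Rightarrow> 'a \<Rightarrow> bool" where
  "local_2_separator E r v0 v1 \<longleftrightarrow>
     v0 \<noteq> v1 \<and>
     (\<exists>a b. distinct_local_comps E r v0 v1 a b) \<and>
     (\<exists>k. 2 * k \<le> r \<and> dist_le E v0 v1 k)"

definition traverses :: "('a, 'b) monoid_scheme \<Rightarrow> 'a set \<Rightarrow> nat \<Rightarrow> 'a \<Rightarrow> 'a \<Rightarrow> 'a \<Rightarrow> bool" where
  "traverses G S r x0 x1 g \<longleftrightarrow>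
     (\<exists>x\<in>{x0, x1}. distinct_local_comps (cay G S) r x0 x1
                      (x \<otimes>\<^bsub>G\<^esub> inv\<^bsub>G\<^esub> g) (x \<otimes>\<^bsub>G\<^esub> g))"

definition traverses_sym :: "('a, 'b) monoid_scheme \<Rightarrow> 'a set \<Rightarrow> nat \<Rightarrow> 'a \<Rightarrow> 'a \<Rightarrow> bool" where
  "traverses_sym G S r h g \<longleftrightarrow>
     traverses G S r \<one>\<^bsub>G\<^esub> h g \<and>
     distinct_local_comps (cay G S) r \<one>\<^bsub>G\<^esub> h (inv\<^bsub>G\<^esub> g) (h \<otimes>\<^bsub>G\<^esub> g)"

definition traverses_antisym :: "('a, 'b) monoid_scheme \<Rightarrow> 'a set \<Rightarrow> nat \<Rightarrow> 'a \<Rightarrow> 'a \<Rightarrow> bool" where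
  "traverses_antisym G S r h g \<longleftrightarrow>
     traverses G S r \<one>\<^bsub>G\<^esub> h g \<and>
     distinct_local_comps (cay G S) r \<one>\<^bsub>G\<^esub> h (inv\<^bsub>G\<^esub> g) (h \<otimes>\<^bsub>G\<^esub> inv\<^bsub>G\<^esub> g)"

end

theory Submission
  imports Defs
begin


lemma is_walk_succ: "is_walk E ws \<longleftrightarrow> ws \<noteq> [] \<and> successively E ws"
  unfolding is_walk_def successively_conv_nth by blast

lemma rtranclp_map:
  assumes "R\<^sup>*\<^sup>* a b" "\<And>x y. R x y \<Longrightarrow> R' (f x) (f y)"
  shows "R'\<^sup>*\<^sup>* (f a) (f b)"
  using assms(1) by (induction rule: rtranclp_induct) (auto intro: rtranclp.rtrancl_into_rtrancl assms(2))

lemma rtranclp_sym: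
  assumes "R\<^sup>*\<^sup>* a b" "\<And>x y. R x y \<Longrightarrow> R y x"
  shows "R\<^sup>*\<^sup>* b a"
  using assms(1) by (induction rule: rtranclp_induct) (auto intro: converse_rtranclp_into_rtranclp assms(2))

lemma conn_in_sym: "conn_in V (ball_E E r v) a b \<Longrightarrow> conn_in V (ball_E E r v) b a"
  unfolding conn_in_def
  apply (elim conjE, intro conjI, assumption, assumption)
  apply (erule rtranclp_sym)
  unfolding ball_E_def by blast

lemma cga_sym: "conn_graph_adj E r v0 v1 a b \<Longrightarrow> conn_graph_adj E r v0 v1 b a"
proof -
  assume "conn_graph_adj E r v0 v1 a b"
  then obtain v where "a \<in> nbhd E {v0, v1}" "b \<in> nbhd E {v0, v1}" "v \<in> {v0, v1}"
    "conn_in (ball_V E r v - {v0, v1}) (ball_E E r v) a b"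
    unfolding conn_graph_adj_def by blast
  then show ?thesis unfolding conn_graph_adj_def using conn_in_sym[of "ball_V E r v - {v0, v1}" E r v a b] by blast
qed

lemma slc_sym: "same_local_comp E r v0 v1 a b \<Longrightarrow> same_local_comp E r v0 v1 b a"
  unfolding same_local_comp_def
  apply (elim conjE, intro conjI, assumption, assumption)
  apply (erule rtranclp_sym)
  by (erule cga_sym)

lemma slc_trans: "same_local_comp E r v0 v1 a b \<Longrightarrow> same_local_comp E r v0 v1 b c \<Longrightarrow> same_local_comp E r v0 v1 a c"
  unfolding same_local_comp_def by auto

lemma succ_conn:
  assumes "successively F W" "W \<noteq> []" "set W \<subseteq> V"
  shows "(\<lambda>x y. x \<in> V \<and> y \<in> V \<and> F x y)\<^sup>*\<^sup>* (hd W) (last W)"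
  using assms
proof (induction W)
  case Nil then show ?case by simp
next
  case (Cons x W)
  show ?case
  proof (cases "W = []")
    case True then show ?thesis by simp
  next
    case False
    then have "(\<lambda>x y. x \<in> V \<and> y \<in> V \<and> F x y)\<^sup>*\<^sup>* (hd W) (last W)"
      using Cons by (auto simp: successively_Cons)
    moreover have "F x (hd W)" "hd W \<in> V" using Cons False by (auto simp: successively_Cons)
    ultimately show ?thesis using Cons False
      by (auto intro: converse_rtranclp_into_rtranclp)
  qed
qed

lemma closed_walk_ballE:
  assumes "closed_walk_at E r v Q"
  shows "successively (ball_E E r v) Q"
  unfolding successively_conv_nth ball_E_def using assms by blast

lemma closed_walk_ballV:
  assumes "closed_walk_at E r v Q"
  shows "set Q \<subseteq> ball_V E r v"
  unfolding ball_V_def using assms by blast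


lemma split_last_in:
  assumes "P \<noteq> []" "hd P \<in> Y" "last P \<notin> Y"
  shows "\<exists>P1 P2. P = P1 @ P2 \<and> P1 \<noteq> [] \<and> last P1 \<in> Y \<and> P2 \<noteq> [] \<and> set P2 \<inter> Y = {}"
  using assms
proof (induction P rule: rev_induct)
  case Nil then show ?case by simp
next
  case (snoc y P)
  show ?case
  proof (cases "P = []")
    case True then show ?thesis using snoc by simp
  next
    case False
    show ?thesis
    proof (cases "last P \<in> Y")
      case True
      then show ?thesis using snoc False by (intro exI[of _ P] exI[of _ "[y]"]) auto
    next
      case nl: False
      then obtain P1 P2 where "P = P1 @ P2" "P1 \<noteq> []" "last P1 \<in> Y" "P2 \<noteq> []" "set P2 \<inter> Y = {}"
        using snoc.IH False snoc.prems by auto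
      then show ?thesis using snoc by (intro exI[of _ P1] exI[of _ "P2 @ [y]"]) auto
    qed
  qed
qed

definition gstep :: "('a, 'b) monoid_scheme \<Rightarrow> 'a \<Rightarrow> 'a \<Rightarrow> 'a \<Rightarrow> 'a \<Rightarrow> bool" where
  "gstep G g h x y \<longleftrightarrow> x \<in> carrier G \<and>
     (y = x \<otimes>\<^bsub>G\<^esub> g \<or> y = x \<otimes>\<^bsub>G\<^esub> inv\<^bsub>G\<^esub> g \<or> y = x \<otimes>\<^bsub>G\<^esub> h)"

context group
begin

lemma cay_transl:
  assumes "S \<subseteq> carrier G" "cay G S x y" "a \<in> carrier G"
  shows "cay G S (a \<otimes> x) (a \<otimes> y)"
  using assms unfolding cay_def by (auto simp: m_assoc subset_iff)

lemma cay_carrier: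
  assumes "S \<subseteq> carrier G" "cay G S x y"
  shows "x \<in> carrier G" "y \<in> carrier G"
  using assms unfolding cay_def by auto

lemma walk_transl:
  assumes "S \<subseteq> carrier G" "is_walk (cay G S) ws" "a \<in> carrier G"
  shows "is_walk (cay G S) (map ((\<otimes>) a) ws)"
  unfolding is_walk_def
proof (intro conjI allI impI)
  show "map ((\<otimes>) a) ws \<noteq> []" using assms(2) unfolding is_walk_def by simp
  fix i assume "Suc i < length (map ((\<otimes>) a) ws)"
  then have i: "Suc i < length ws" by simp
  then have "cay G S (ws ! i) (ws ! Suc i)" using assms(2) unfolding is_walk_def by blast
  then have "cay G S (a \<otimes> ws ! i) (a \<otimes> ws ! Suc i)" by (rule cay_transl[OF assms(1) _ assms(3)])
  then show "cay G S (map ((\<otimes>) a) ws ! i) (map ((\<otimes>) a) ws ! Suc i)" using i by simp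
qed

lemma cw_transl:
  assumes "S \<subseteq> carrier G" "closed_walk_at (cay G S) r v ws" "a \<in> carrier G"
  shows "closed_walk_at (cay G S) r (a \<otimes> v) (map ((\<otimes>) a) ws)"
proof -
  have w: "is_walk (cay G S) ws" "hd ws = v" "last ws = v" "length ws \<le> Suc r"
    using assms(2) unfolding closed_walk_at_def by auto
  then have ne: "ws \<noteq> []" unfolding is_walk_def by simp
  show ?thesis unfolding closed_walk_at_def
    using walk_transl[OF assms(1) w(1) assms(3)] w ne by (simp add: hd_map last_map)
qed

lemma ballV_transl:
  assumes "S \<subseteq> carrier G" "u \<in> ball_V (cay G S) r v" "a \<in> carrier G"
  shows "a \<otimes> u \<in> ball_V (cay G S) r (a \<otimes> v)"
proof -
  obtain ws where "closed_walk_at (cay G S) r v ws" "u \<in> set ws" using assms(2) unfolding ball_V_def by blast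
  then show ?thesis unfolding ball_V_def
    by (intro CollectI exI[of _ "map ((\<otimes>) a) ws"]) (simp add: cw_transl[OF assms(1) _ assms(3)])
qed

lemma ballE_transl:
  assumes "S \<subseteq> carrier G" "ball_E (cay G S) r v x y" "a \<in> carrier G"
  shows "ball_E (cay G S) r (a \<otimes> v) (a \<otimes> x) (a \<otimes> y)"
proof -
  obtain ws i where "closed_walk_at (cay G S) r v ws" "Suc i < length ws"
      "(ws ! i = x \<and> ws ! Suc i = y) \<or> (ws ! i = y \<and> ws ! Suc i = x)"
    using assms(2) unfolding ball_E_def by blast
  then show ?thesis unfolding ball_E_def
    by (intro exI[of _ "map ((\<otimes>) a) ws"] exI[of _ i]) (auto intro: cw_transl[OF assms(1) _ assms(3)])
qed

lemma ballV_carrier: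
  assumes "S \<subseteq> carrier G" "u \<in> ball_V (cay G S) r v" "v \<in> carrier G"
  shows "u \<in> carrier G"
proof -
  obtain ws where ws: "closed_walk_at (cay G S) r v ws" "u \<in> set ws"
    using assms unfolding ball_V_def by blast
  then obtain i where i: "i < length ws" "u = ws ! i" by (auto simp: in_set_conv_nth)
  show ?thesis
  proof (cases "Suc i < length ws")
    case True
    then show ?thesis using ws i cay_carrier[OF assms(1)] unfolding closed_walk_at_def is_walk_def by blast
  next
    case False
    then have "i = length ws - 1" using i by simp
    moreover have "ws \<noteq> []" using i by auto
    ultimately have "u = last ws" using i by (simp add: last_conv_nth)
    then show ?thesis using ws assms unfolding closed_walk_at_def by simp
  qed
qed


lemma notX_transl:
  assumes "h \<in> carrier G" "h \<otimes> h = \<one>" "x \<in> carrier G" "x \<notin> {\<one>, h}"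
  shows "h \<otimes> x \<notin> {\<one>, h}"
proof
  assume "h \<otimes> x \<in> {\<one>, h}"
  then have "h \<otimes> x = \<one> \<or> h \<otimes> x = h" by simp
  then show False
  proof
    assume "h \<otimes> x = \<one>"
    then have "h \<otimes> (h \<otimes> x) = h" using assms by simp
    then have "x = h" using assms by (simp add: m_assoc[symmetric])
    then show False using assms by simp
  next
    assume "h \<otimes> x = h"
    then have "x = \<one>" using assms
      by (metis r_one l_cancel one_closed)
    then show False using assms by simp
  qed
qed

lemma nbhd_transl:
  assumes "S \<subseteq> carrier G" "h \<in> carrier G" "h \<otimes> h = \<one>" "a \<in> nbhd (cay G S) {\<one>, h}"
  shows "h \<otimes> a \<in> nbhd (cay G S) {\<one>, h}"
proof -
  obtain z where z: "z \<in> {\<one>, h}" "cay G S z a" "a \<notin> {\<one>, h}" using assms(4) unfolding nbhd_def by blast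
  have ac: "a \<in> carrier G" using cay_carrier[OF assms(1) z(2)] by simp
  have "cay G S (h \<otimes> z) (h \<otimes> a)" using cay_transl[OF assms(1) z(2) assms(2)] .
  moreover have "h \<otimes> z \<in> {\<one>, h}" using z assms by auto
  moreover have "h \<otimes> a \<notin> {\<one>, h}" using notX_transl[OF assms(2,3) ac z(3)] .
  ultimately show ?thesis unfolding nbhd_def by blast
qed

lemma conn_in_transl:
  assumes "S \<subseteq> carrier G" "h \<in> carrier G" "h \<otimes> h = \<one>" "v \<in> carrier G"
    "conn_in (ball_V (cay G S) r v - {\<one>, h}) (ball_E (cay G S) r v) a b"
  shows "conn_in (ball_V (cay G S) r (h \<otimes> v) - {\<one>, h}) (ball_E (cay G S) r (h \<otimes> v)) (h \<otimes> a) (h \<otimes> b)"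
proof -
  have V: "h \<otimes> x \<in> ball_V (cay G S) r (h \<otimes> v) - {\<one>, h}" if "x \<in> ball_V (cay G S) r v - {\<one>, h}" for x
  proof -
    have xc: "x \<in> carrier G" using ballV_carrier[OF assms(1) _ assms(4)] that by blast
    show ?thesis using ballV_transl[OF assms(1) _ assms(2)] notX_transl[OF assms(2,3) xc] that by blast
  qed
  let ?V = "ball_V (cay G S) r v - {\<one>, h}" and ?V' = "ball_V (cay G S) r (h \<otimes> v) - {\<one>, h}"
  have a: "a \<in> ?V" "b \<in> ?V" and R: "(\<lambda>x y. x \<in> ?V \<and> y \<in> ?V \<and> ball_E (cay G S) r v x y)\<^sup>*\<^sup>* a b"
    using assms(5) unfolding conn_in_def by auto
  have "(\<lambda>x y. x \<in> ?V' \<and> y \<in> ?V' \<and> ball_E (cay G S) r (h \<otimes> v) x y)\<^sup>*\<^sup>* (h \<otimes> a) (h \<otimes> b)"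
    using R by (rule rtranclp_map) (use V ballE_transl[OF assms(1) _ assms(2)] in blast)
  then show ?thesis unfolding conn_in_def using V a by blast
qed

lemma slc_transl:
  assumes "S \<subseteq> carrier G" "h \<in> carrier G" "h \<otimes> h = \<one>"
    "same_local_comp (cay G S) r \<one> h a b"
  shows "same_local_comp (cay G S) r \<one> h (h \<otimes> a) (h \<otimes> b)"
proof -
  have adj: "conn_graph_adj (cay G S) r \<one> h (h \<otimes> x) (h \<otimes> y)" if xy: "conn_graph_adj (cay G S) r \<one> h x y" for x y
  proof -
    obtain v where v: "v \<in> {\<one>, h}" "conn_in (ball_V (cay G S) r v - {\<one>, h}) (ball_E (cay G S) r v) x y"
      and xn: "x \<in> nbhd (cay G S) {\<one>, h}" and yn: "y \<in> nbhd (cay G S) {\<one>, h}"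
      using xy unfolding conn_graph_adj_def by blast
    have vc: "v \<in> carrier G" using v assms by auto
    have hv: "h \<otimes> v \<in> {\<one>, h}" using v assms by auto
    have c: "conn_in (ball_V (cay G S) r (h \<otimes> v) - {\<one>, h}) (ball_E (cay G S) r (h \<otimes> v)) (h \<otimes> x) (h \<otimes> y)"
      by (rule conn_in_transl[OF assms(1-3) vc v(2)])
    have "h \<otimes> x \<in> nbhd (cay G S) {\<one>, h}" by (rule nbhd_transl[OF assms(1-3) xn])
    moreover have "h \<otimes> y \<in> nbhd (cay G S) {\<one>, h}" by (rule nbhd_transl[OF assms(1-3) yn])
    ultimately show ?thesis unfolding conn_graph_adj_def using c hv by blast
  qed
  have an: "a \<in> nbhd (cay G S) {\<one>, h}" and bn: "b \<in> nbhd (cay G S) {\<one>, h}"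
    and R: "(conn_graph_adj (cay G S) r \<one> h)\<^sup>*\<^sup>* a b"
    using assms(4) unfolding same_local_comp_def by auto
  have "(conn_graph_adj (cay G S) r \<one> h)\<^sup>*\<^sup>* (h \<otimes> a) (h \<otimes> b)"
    using R by (rule rtranclp_map) (rule adj)
  then show ?thesis unfolding same_local_comp_def
    using nbhd_transl[OF assms(1-3) an] nbhd_transl[OF assms(1-3) bn] by blast
qed

lemma iter_comm_closed:
  assumes "g \<in> carrier G" "h \<in> carrier G"
  shows "iter_comm G g h k \<in> carrier G"
  by (induction k) (use assms in auto)

lemma gstep_transl:
  assumes "g \<in> carrier G" "h \<in> carrier G" "gstep G g h x y" "a \<in> carrier G"
  shows "gstep G g h (a \<otimes> x) (a \<otimes> y)"
  using assms unfolding gstep_def by (auto simp: m_assoc)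

lemma gstep_sym:
  assumes "g \<in> carrier G" "h \<in> carrier G" "h \<otimes> h = \<one>" "gstep G g h x y"
  shows "gstep G g h y x"
proof -
  have ih: "inv h = h" using assms by (simp add: inv_equality)
  show ?thesis using assms unfolding gstep_def
    by (auto simp: m_assoc ih)
qed

lemma gstep_carrier:
  assumes "g \<in> carrier G" "h \<in> carrier G" "gstep G g h x y"
  shows "y \<in> carrier G"
  using assms unfolding gstep_def by auto

lemma gwalk_exists:
  assumes "g \<in> carrier G" "h \<in> carrier G" "h \<otimes> h = \<one>"
  shows "\<exists>P. P \<noteq> [] \<and> successively (gstep G g h) P \<and> hd P = \<one> \<and>
            last P = iter_comm G h g k \<and> length P < 2 ^ (k + 2)"
proof (induction k)
  case 0
  show ?case
    by (rule exI[of _ "[\<one>, g]"]) (use assms in \<open>auto simp: gstep_def\<close>)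
next
  case (Suc k)
  then obtain P where P: "P \<noteq> []" "successively (gstep G g h) P" "hd P = \<one>"
    "last P = iter_comm G h g k" "length P < 2 ^ (k + 2)" by blast
  define d where "d = iter_comm G h g k"
  have dc: "d \<in> carrier G" unfolding d_def using iter_comm_closed assms by blast
  have ih: "inv h = h" using assms by (simp add: inv_equality)
  define a where "a = h \<otimes> inv d"
  define b where "b = h \<otimes> inv d \<otimes> h"
  have ac: "a \<in> carrier G" "b \<in> carrier G" using dc assms unfolding a_def b_def by auto
  define P' where "P' = \<one> # map ((\<otimes>) a) (rev P) @ map ((\<otimes>) b) P"
  have s1: "successively (gstep G g h) (map ((\<otimes>) a) (rev P))"
    unfolding successively_map successively_rev
    by (rule successively_mono[OF P(2)]) (use gstep_transl gstep_sym assms ac in blast)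
  have s2: "successively (gstep G g h) (map ((\<otimes>) b) P)"
    unfolding successively_map
    by (rule successively_mono[OF P(2)]) (use gstep_transl assms ac in blast)
  have l1: "last (map ((\<otimes>) a) (rev P)) = a \<otimes> \<one>" using P by (simp add: last_map last_rev)
  have h1: "hd (map ((\<otimes>) a) (rev P)) = a \<otimes> d" using P d_def by (simp add: hd_map hd_rev)
  have h2: "hd (map ((\<otimes>) b) P) = b \<otimes> \<one>" using P by (simp add: hd_map)
  have l2: "last (map ((\<otimes>) b) P) = b \<otimes> d" using P d_def by (simp add: last_map)
  have e1: "a \<otimes> d = \<one> \<otimes> h" unfolding a_def using dc assms by (simp add: m_assoc)
  have e2: "b \<otimes> \<one> = (a \<otimes> \<one>) \<otimes> h" unfolding a_def b_def using dc assms by (simp add: m_assoc)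
  have c1: "gstep G g h \<one> (a \<otimes> d)" unfolding gstep_def e1 by simp
  have c2: "gstep G g h (a \<otimes> \<one>) (b \<otimes> \<one>)" unfolding gstep_def e2 using ac by simp
  have "successively (gstep G g h) P'"
    unfolding P'_def
    using s1 s2 c1 c2 l1 h1 h2 P(1)
    by (auto simp: successively_append_iff successively_Cons)
  moreover have "last P' = iter_comm G h g (Suc k)"
    unfolding P'_def using l2 P(1) by (simp add: b_def d_def ih)
  moreover have "length P' < 2 ^ (Suc k + 2)" unfolding P'_def using P(5) by simp
  ultimately show ?case unfolding P'_def by auto
qed


lemma gwalk_carrier:
  assumes "g \<in> carrier G" "h \<in> carrier G" "successively (gstep G g h) P" "P \<noteq> []" "hd P \<in> carrier G"
  shows "set P \<subseteq> carrier G"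
  using assms(3-5)
proof (induction P)
  case Nil then show ?case by simp
next
  case (Cons x P)
  then show ?case
    using gstep_carrier[OF assms(1,2)] by (cases P) (auto simp: successively_Cons)
qed

lemma gstep_cay:
  assumes "g \<in> S" "h \<in> S" "\<forall>s\<in>S. inv s \<in> S" "gstep G g h x y"
  shows "cay G S x y"
  using assms unfolding gstep_def cay_def by auto

lemma core:
  assumes SC: "S \<subseteq> carrier G" and Sinv: "\<forall>s\<in>S. inv s \<in> S" and gS: "g \<in> S" and hS: "h \<in> S"
    and hh: "h \<otimes> h = \<one>" and dc: "d \<in> carrier G" and comm: "h \<otimes> d = d \<otimes> h"
    and dX: "d \<notin> {\<one>, h}"
    and P: "P \<noteq> []" "successively (gstep G g h) P" "hd P = \<one>" "last P = d"
    and len: "2 * length P \<le> r"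
  shows "same_local_comp (cay G S) r \<one> h g (h \<otimes> g) \<or>
         same_local_comp (cay G S) r \<one> h (inv g) (h \<otimes> inv g)"
proof -
  let ?E = "cay G S"
  let ?X = "{\<one>, h}"
  have gc: "g \<in> carrier G" and hc: "h \<in> carrier G" using gS hS SC by auto
  have ih: "inv h = h" using hh hc by (simp add: inv_equality)
  have Pc: "set P \<subseteq> carrier G" using gwalk_carrier[OF gc hc P(2,1)] P(3) by simp
  have hP: "hd P \<in> ?X" using P(3) by simp
  have lP: "last P \<notin> ?X" using P(4) dX by simp
  obtain P1 P2 where PP: "P = P1 @ P2" "P1 \<noteq> []" "last P1 \<in> ?X" "P2 \<noteq> []" "set P2 \<inter> ?X = {}"
    using split_last_in[OF P(1) hP lP] by blast
  define Q where "Q = P @ map ((\<otimes>) h) (rev P) @ [\<one>]"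
  have sP: "successively ?E P"
    by (rule successively_mono[OF P(2) gstep_cay[OF gS hS Sinv]])
  have sPr: "successively ?E (map ((\<otimes>) h) (rev P))"
    unfolding successively_map successively_rev
  proof (rule successively_mono[OF P(2)])
    fix x y assume "gstep G g h x y"
    then have "gstep G g h y x" by (rule gstep_sym[OF gc hc hh])
    then have "?E y x" by (rule gstep_cay[OF gS hS Sinv])
    then show "?E (h \<otimes> y) (h \<otimes> x)" by (rule cay_transl[OF SC _ hc])
  qed
  have j1: "?E d (h \<otimes> d)" unfolding cay_def comm using dc hS by blast
  have j2: "?E h \<one>" unfolding cay_def using hc hS hh by force
  have hr: "hd (map ((\<otimes>) h) (rev P)) = h \<otimes> d" using P(1,4) by (simp add: hd_map hd_rev)
  have lr: "last (map ((\<otimes>) h) (rev P)) = h" using P(1,3) hc by (simp add: last_map last_rev)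
  have s3: "successively ?E (map ((\<otimes>) h) (rev P) @ [\<one>])"
    unfolding successively_append_iff using sPr j2 lr by simp
  have "successively ?E Q"
    unfolding Q_def successively_append_iff[of _ P]
    using sP s3 j1 P(1,4) hr by (simp add: hd_append)
  moreover have "Q \<noteq> []" unfolding Q_def by simp
  moreover have "hd Q = \<one>" "last Q = \<one>" unfolding Q_def using P by auto
  moreover have "length Q \<le> Suc r" unfolding Q_def using len by simp
  ultimately have cw: "closed_walk_at ?E r \<one> Q"
    unfolding closed_walk_at_def is_walk_succ by blast
  define W where "W = P2 @ map ((\<otimes>) h) (rev P2)"
  have QW: "Q = P1 @ W @ (map ((\<otimes>) h) (rev P1) @ [\<one>])"
    unfolding Q_def W_def PP(1) by simp
  have sW: "successively (ball_E ?E r \<one>) W"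
    using closed_walk_ballE[OF cw] unfolding QW by (simp add: successively_append_iff)
  have P2c: "set P2 \<subseteq> carrier G" using Pc PP(1) by auto
  have WV: "set W \<subseteq> ball_V ?E r \<one> - ?X"
  proof -
    have "set W \<subseteq> set Q" unfolding QW by auto
    moreover have "set W \<inter> ?X = {}"
    proof -
      have "h \<otimes> y \<notin> ?X" if "y \<in> set P2" for y
      proof -
        have "y \<in> carrier G" "y \<notin> ?X" using that P2c PP(5) by auto
        then show ?thesis by (rule notX_transl[OF hc hh])
      qed
      then show ?thesis unfolding W_def set_append set_map set_rev using PP(5) by blast
    qed
    ultimately show ?thesis using closed_walk_ballV[OF cw] by blast
  qed
  have Wne: "W \<noteq> []" unfolding W_def using PP by simp
  define u where "u = hd P2"
  have hW: "hd W = u" "last W = h \<otimes> u" unfolding W_def u_def using PP(4)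
    by (auto simp: hd_append last_map last_rev)
  have ci: "conn_in (ball_V ?E r \<one> - ?X) (ball_E ?E r \<one>) u (h \<otimes> u)"
  proof -
    have "hd W \<in> set W" "last W \<in> set W" using Wne by auto
    then have "hd W \<in> ball_V ?E r \<one> - ?X" "last W \<in> ball_V ?E r \<one> - ?X" using WV by blast+
    then show ?thesis unfolding conn_in_def using succ_conn[OF sW Wne WV] unfolding hW by blast
  qed
  define x where "x = last P1"
  have xX: "x \<in> ?X" using PP x_def by simp
  have gxu: "gstep G g h x u"
    using P(2) unfolding PP(1) x_def u_def using PP(2,4) by (simp add: successively_append_iff)
  have uX: "u \<notin> ?X" using PP(4,5) unfolding u_def by (cases P2) auto
  have uc: "u \<in> carrier G" using P2c PP(4) unfolding u_def by (cases P2) auto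
  have xu: "?E x u" using gstep_cay[OF gS hS Sinv gxu] .
  have "u \<in> nbhd ?E ?X" unfolding nbhd_def using xX xu uX by blast
  moreover have "h \<otimes> u \<in> nbhd ?E ?X"
  proof -
    have "?E (h \<otimes> x) (h \<otimes> u)" using cay_transl[OF SC xu hc] .
    moreover have "h \<otimes> x \<in> ?X" using xX hc hh by auto
    ultimately show ?thesis unfolding nbhd_def using notX_transl[OF hc hh uc uX] by blast
  qed
  ultimately have slc: "same_local_comp ?E r \<one> h u (h \<otimes> u)"
    unfolding same_local_comp_def conn_graph_adj_def using ci by blast
  have xc: "x \<in> carrier G" using xX hc by auto
  have "u = x \<otimes> g \<or> u = x \<otimes> inv g" using gxu uX xX hh hc unfolding gstep_def by auto
  moreover have "x = \<one> \<or> x = h" using xX by simp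
  ultimately show ?thesis
  proof (elim disjE)
    assume "u = x \<otimes> g" "x = \<one>" then show ?thesis using slc gc by simp
  next
    assume "u = x \<otimes> inv g" "x = \<one>" then show ?thesis using slc gc by simp
  next
    assume a: "u = x \<otimes> g" "x = h"
    then have "h \<otimes> u = g" using hh hc gc by (simp add: m_assoc[symmetric])
    then show ?thesis using slc slc_sym a by metis
  next
    assume a: "u = x \<otimes> inv g" "x = h"
    then have "h \<otimes> u = inv g" using hh hc gc by (simp add: m_assoc[symmetric])
    then show ?thesis using slc slc_sym a by metis
  qed
qed


lemma main_in_ctx:
  assumes nil: "nilpotent_class_le G n"
    and SC0: "S \<subseteq> carrier G - {\<one>}"
    and Sinv: "\<forall>s\<in>S. inv s \<in> S"
    and rge: "r \<ge> max (2 ^ (n + 2)) 10"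
    and hS: "h \<in> S" and hh: "h \<otimes> h = \<one>"
  shows "\<forall>g\<in>S. traverses_antisym G S r h g \<longrightarrow> traverses_sym G S r h g"
proof (intro ballI impI)
  fix g assume gS: "g \<in> S" and anti: "traverses_antisym G S r h g"
  let ?E = "cay G S"
  let ?X = "{\<one>, h}"
  let ?same = "same_local_comp ?E r \<one> h"
  have SC: "S \<subseteq> carrier G" using SC0 by auto
  have gc: "g \<in> carrier G" and hc: "h \<in> carrier G" using gS hS SC by auto
  have g1: "g \<noteq> \<one>" and h1: "h \<noteq> \<one>" using gS hS SC0 by auto
  have ih: "inv h = h" using hh hc by (simp add: inv_equality)
  have trav: "traverses G S r \<one> h g"
    and dist1: "distinct_local_comps ?E r \<one> h (inv g) (h \<otimes> inv g)"
    using anti unfolding traverses_antisym_def by auto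
  have ignb: "inv g \<in> nbhd ?E ?X" using dist1 unfolding distinct_local_comps_def by auto
  have igh: "inv g \<noteq> h" using ignb unfolding nbhd_def by auto
  have gh: "g \<noteq> h" using igh ih by auto
  have hgnb: "h \<otimes> g \<in> nbhd ?E ?X"
  proof -
    have "h \<otimes> g \<notin> ?X" using notX_transl[OF hc hh gc] g1 gh by auto
    moreover have "?E h (h \<otimes> g)" unfolding cay_def using hc gS by blast
    ultimately show ?thesis unfolding nbhd_def by blast
  qed
  have itn: "iter_comm G h g n = \<one>"
  proof -
    have "h \<noteq> inv g" using igh by auto
    then show ?thesis using nil gh hc gc unfolding nilpotent_class_le_def by auto
  qed
  define k0 where "k0 = (LEAST k. iter_comm G h g k = \<one>)"
  have k0: "iter_comm G h g k0 = \<one>" unfolding k0_def by (rule LeastI[of _ n]) (rule itn)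
  have k0n: "k0 \<le> n" unfolding k0_def by (rule Least_le) (rule itn)
  have "k0 \<noteq> 0"
  proof
    assume "k0 = 0" then show False using k0 g1 by simp
  qed
  then obtain j where j: "k0 = Suc j" by (cases k0) auto
  define d where "d = iter_comm G h g j"
  have dc: "d \<in> carrier G" unfolding d_def using iter_comm_closed hc gc by blast
  have d1: "d \<noteq> \<one>" unfolding d_def using not_less_Least[of j "\<lambda>k. iter_comm G h g k = \<one>"] j k0_def by auto
  have e: "h \<otimes> inv d \<otimes> h \<otimes> d = \<one>" using k0 j ih unfolding d_def by simp
  have comm: "h \<otimes> d = d \<otimes> h"
  proof -
    have "inv d = h \<otimes> inv d \<otimes> h" using inv_equality[OF e] dc hc by simp
    then have "inv (inv d) = inv (h \<otimes> inv d \<otimes> h)" by simp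
    then have "d = h \<otimes> d \<otimes> h" using dc hc ih by (simp add: inv_mult_group m_assoc)
    then have "d \<otimes> h = h \<otimes> d \<otimes> h \<otimes> h" by simp
    then show ?thesis using dc hc hh by (simp add: m_assoc)
  qed
  have dh: "d \<noteq> h"
  proof (cases j)
    case 0 then show ?thesis using gh unfolding d_def by simp
  next
    case (Suc j')
    define c where "c = iter_comm G h g j'"
    have cc: "c \<in> carrier G" unfolding c_def using iter_comm_closed hc gc by blast
    have dd: "d = h \<otimes> (inv c \<otimes> h \<otimes> c)" unfolding d_def Suc iter_comm.simps c_def[symmetric] using ih cc hc by (simp add: m_assoc)
    show ?thesis
    proof
      assume "d = h"
      then have "h \<otimes> (inv c \<otimes> h \<otimes> c) = h \<otimes> \<one>" using dd hc by simp
      then have "inv c \<otimes> h \<otimes> c = \<one>" using hc cc l_cancel by blast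
      then have "c \<otimes> (inv c \<otimes> h \<otimes> c) = c" using cc by simp
      then have "h \<otimes> c = \<one> \<otimes> c" using cc hc by (simp add: m_assoc[symmetric])
      then have "h = \<one>" using cc hc r_cancel by blast
      then show False using h1 by simp
    qed
  qed
  obtain P where P: "P \<noteq> []" "successively (gstep G g h) P" "hd P = \<one>"
    "last P = d" "length P < 2 ^ (j + 2)"
    using gwalk_exists[OF gc hc hh, of j] unfolding d_def by blast
  have "2 * length P \<le> r"
  proof -
    have "2 * length P < 2 * 2 ^ (j + 2)" using P(5) by simp
    also have "\<dots> = 2 ^ (k0 + 2)" using j by simp
    also have "\<dots> \<le> 2 ^ (n + 2)" using k0n by (intro power_increasing) auto
    finally show ?thesis using rge by simp
  qed
  then have cor: "?same g (h \<otimes> g) \<or> ?same (inv g) (h \<otimes> inv g)"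
    using core[OF SC Sinv gS hS hh dc comm _ P(1-4)] dh d1 by blast
  have sg: "?same g (h \<otimes> g)" using cor dist1 unfolding distinct_local_comps_def by blast
  have nsame: "\<not> ?same (inv g) (h \<otimes> g)"
  proof
    assume a: "?same (inv g) (h \<otimes> g)"
    then have s1: "?same (inv g) g" using slc_trans slc_sym sg by metis
    have s2: "?same (h \<otimes> inv g) (h \<otimes> g)" using slc_transl[OF SC hc hh s1] .
    show False using trav s1 s2 gc unfolding traverses_def distinct_local_comps_def by auto
  qed
  show "traverses_sym G S r h g"
    unfolding traverses_sym_def distinct_local_comps_def using trav ignb hgnb nsame by blast
qed

end


theorem proposition8p6:
  fixes G :: "('a, 'b) monoid_scheme" and S :: "'a set" and n r :: nat and h :: 'a
  assumes "group G"
    and "nilpotent_class_le G n"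
    and "S \<subseteq> carrier G - {\<one>\<^bsub>G\<^esub>}"
    and "\<forall>s\<in>S. inv\<^bsub>G\<^esub> s \<in> S"
    and "generate G S = carrier G"
    and "r \<ge> max (2 ^ (n + 2)) 10"
    and "h \<in> S" and "h \<otimes>\<^bsub>G\<^esub> h = \<one>\<^bsub>G\<^esub>"
    and "local_2_separator (cay G S) r \<one>\<^bsub>G\<^esub> h"
    and "\<forall>v\<in>carrier G. \<not> local_cutvertex (cay G S) r v"
  shows "\<forall>g\<in>S. traverses_antisym G S r h g \<longrightarrow> traverses_sym G S r h g"
    using group.main_in_ctx[OF assms(1) assms(2) assms(3) assms(4) assms(6) assms(7) assms(8)] .

end
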